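(* Let $(V,d,k,q)$ be an instance of the individually fair $k$-center with outliers problem (IF$k$CO) as defined in the context. Then the naive algorithm (Algorithm 1) described in the context outputs a feasible solution $(S,O,\sigma)$ for this instance, i.e. $|S|\le k$ and $|O|\le q$.
   Context: IF$k$CO instance: a finite set $V$ with $|V|=n$, a metric $d$ on $V$ (nonnegative, symmetric, $d_{ii}=0$, triangle inequality), and integers $k\ge1$ and $q\ge0$. A solution is $(S,O,\sigma)$ with $S\subseteq V$ (centers), $O\subseteq V$ (outliers), $\sigma:V\setminus O\to S$; it is feasible if $|S|\le k$ and $|O|\le q$. For $i\in V$, the neighborhood radius $NR(i)$ is the distance from $i$ to its $\lceil n/k\rceil$-th nearest neighbor in $V$, where $i$ counts as its own (first) nearest neighbor. Algorithm 1: set $P:=V$, $S:=\emptyset$. While $P\ne\emptyset$: pick $s\in P$ minimizing $NR(i)$ over $i\in P$; set $S:=S\cup\{s\}$ and $P:=\{i\in P: d_{is}>2\,NR(i)\}$. Then set $O:=\emptyset$ and, for each $i\in V$, let $\sigma(i)$ be a center $h\in S$ minimizing $d_{ih}$. Output $(S,O,\sigma)$. *)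

theory Defs
  imports Complex_Main "HOL-Library.Multiset"
begin

definition is_metric_on :: "'a set \<Rightarrow> ('a \<Rightarrow> 'a \<Rightarrow> real) \<Rightarrow> bool" where
  "is_metric_on V d \<longleftrightarrow>
     (\<forall>i\<in>V. \<forall>j\<in>V. d i j \<ge> 0) \<and>
     (\<forall>i\<in>V. \<forall>j\<in>V. d i j = d j i) \<and>
     (\<forall>i\<in>V. d i i = 0) \<and>
     (\<forall>i\<in>V. \<forall>j\<in>V. \<forall>l\<in>V. d i l \<le> d i j + d j l)"

definition nbr_count :: "'a set \<Rightarrow> nat \<Rightarrow> nat" where
  "nbr_count V k = nat \<lceil>real (card V) / real k\<rceil>"

text \<open>NR(i): distance from i to its ceil(n/k)-th nearest neighbour in V
  (i itself counting as the first), i.e. the ceil(n/k)-th smallest entry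
  (with multiplicity) of the multiset of distances from i to the points of V.\<close>
definition NR :: "'a set \<Rightarrow> ('a \<Rightarrow> 'a \<Rightarrow> real) \<Rightarrow> nat \<Rightarrow> 'a \<Rightarrow> real" where
  "NR V d k i = sorted_list_of_multiset (image_mset (d i) (mset_set V)) ! (nbr_count V k - 1)"

text \<open>One iteration of the while loop of Algorithm 1 on state (P, S).
  Any minimiser may be picked (arbitrary tie-breaking).\<close>
definition alg1_step :: "'a set \<Rightarrow> ('a \<Rightarrow> 'a \<Rightarrow> real) \<Rightarrow> nat \<Rightarrow>
    'a set \<times> 'a set \<Rightarrow> 'a set \<times> 'a set \<Rightarrow> bool" where
  "alg1_step V d k st st' \<longleftrightarrow>
     (\<exists>s. fst st \<noteq> {} \<and> s \<in> fst st \<and> (\<forall>i\<in>fst st. NR V d k s \<le> NR V d k i) \<and>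
          st' = ({i \<in> fst st. d i s > 2 * NR V d k i}, insert s (snd st)))"

definition alg1_output :: "'a set \<Rightarrow> ('a \<Rightarrow> 'a \<Rightarrow> real) \<Rightarrow> nat \<Rightarrow>
    'a set \<Rightarrow> 'a set \<Rightarrow> ('a \<Rightarrow> 'a) \<Rightarrow> bool" where
  "alg1_output V d k S Out \<sigma> \<longleftrightarrow>
     (alg1_step V d k)\<^sup>*\<^sup>* (V, {}) ({}, S) \<and>
     Out = {} \<and>
     (\<forall>i\<in>V. \<sigma> i \<in> S \<and> (\<forall>h\<in>S. d i (\<sigma> i) \<le> d i h))"

end

theory Submission
  imports Defs
begin

definition ballx :: "'a set \<Rightarrow> ('a \<Rightarrow> 'a \<Rightarrow> real) \<Rightarrow> nat \<Rightarrow> 'a \<Rightarrow> 'a set" where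
  "ballx V d k i = {j\<in>V. d i j \<le> NR V d k i}"

lemma ball_card:
  assumes fin: "finite V" and k: "k \<ge> 1" and iV: "i \<in> V"
  shows "nbr_count V k \<le> card (ballx V d k i)"
proof -
  define M where "M = image_mset (d i) (mset_set V)"
  define xs where "xs = sorted_list_of_multiset M"
  define m where "m = nbr_count V k"
  have len: "length xs = card V" unfolding xs_def M_def
    by (metis fin mset_sorted_list_of_multiset size_image_mset size_mset size_mset_set)
  have srt: "sorted xs" unfolding xs_def by simp
  have n0: "card V > 0" using fin iV card_gt_0_iff by blast
  have m1: "m \<ge> 1"
  proof -
    have "real (card V) / real k > 0" using n0 k by (intro divide_pos_pos) auto
    hence "\<lceil>real (card V) / real k\<rceil> \<ge> 1" by (simp only: one_le_ceiling)
    thus ?thesis unfolding m_def nbr_count_def by linarith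
  qed
  have mn: "m \<le> card V"
  proof -
    have "real (card V) / real k \<le> real (card V) / 1" using k
      by (intro divide_left_mono) auto
    hence "\<lceil>real (card V) / real k\<rceil> \<le> int (card V)"
      by (simp add: ceiling_le_iff)
    thus ?thesis unfolding m_def nbr_count_def by linarith
  qed
  have NRdef: "NR V d k i = xs ! (m - 1)" unfolding NR_def xs_def M_def m_def by simp
  define Q where "Q = (\<lambda>x. x \<le> NR V d k i)"
  have h: "filter Q (take m xs) = take m xs"
  proof -
    have "\<forall>x\<in>set (take m xs). Q x"
    proof
      fix x assume "x \<in> set (take m xs)"
      then obtain j where j: "j < length (take m xs)" "x = take m xs ! j"
        by (metis in_set_conv_nth)
      hence "j \<le> m - 1" "m - 1 < length xs" using mn len m1 by auto
      thus "Q x" using j srt NRdef unfolding Q_def by (simp add: sorted_nth_mono)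
    qed
    thus ?thesis by (simp add: filter_id_conv)
  qed
  have A: "length (filter Q xs) =
      length (filter Q (take m xs)) + length (filter Q (drop m xs))"
    by (subst append_take_drop_id[symmetric, of xs m], simp only: filter_append length_append)
  have B: "length (filter Q (take m xs)) = m"
    using h len mn by simp
  have L: "m \<le> length (filter Q xs)" using A B by linarith
  have E1: "length (filter Q xs) = size (filter_mset Q M)"
    unfolding xs_def by (metis mset_filter mset_sorted_list_of_multiset size_mset)
  have E2: "filter_mset Q M = image_mset (d i) (filter_mset (\<lambda>j. d i j \<le> NR V d k i) (mset_set V))"
    unfolding M_def Q_def by (simp add: filter_mset_image_mset)
  have E3: "size (image_mset (d i) (filter_mset (\<lambda>j. d i j \<le> NR V d k i) (mset_set V))) = card (ballx V d k i)"
    unfolding ballx_def using fin by (simp add: filter_mset_mset_set)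
  show ?thesis using L E1 E2 E3 unfolding m_def by simp
qed

lemma disj:
  assumes met: "is_metric_on V d" and sV: "s \<in> V" and pV: "p \<in> V"
    and le: "NR V d k s \<le> NR V d k p" and gt: "d p s > 2 * NR V d k p"
  shows "ballx V d k s \<inter> ballx V d k p = {}"
proof (rule ccontr)
  assume "ballx V d k s \<inter> ballx V d k p \<noteq> {}"
  then obtain x where x: "x \<in> V" "d s x \<le> NR V d k s" "d p x \<le> NR V d k p"
    unfolding ballx_def by auto
  have "d p s \<le> d p x + d x s" using met x sV pV unfolding is_metric_on_def by blast
  also have "d x s = d s x" using met x sV unfolding is_metric_on_def by blast
  finally show False using x le gt by linarith
qed

definition inv1 where
  "inv1 V d k st \<longleftrightarrow> fst st \<subseteq> V \<and> snd st \<subseteq> V \<and>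
     (\<forall>s\<in>snd st. \<forall>p\<in>fst st. ballx V d k s \<inter> ballx V d k p = {}) \<and>
     (\<forall>s\<in>snd st. \<forall>t\<in>snd st. s \<noteq> t \<longrightarrow> ballx V d k s \<inter> ballx V d k t = {})"

lemma inv_step:
  assumes met: "is_metric_on V d" and st: "alg1_step V d k st st'" and I: "inv1 V d k st"
  shows "inv1 V d k st'"
proof -
  obtain P S where stp: "st = (P, S)" by (cases st)
  from st obtain s where s: "s \<in> P" "\<forall>i\<in>P. NR V d k s \<le> NR V d k i"
    and st': "st' = ({i \<in> P. d i s > 2 * NR V d k i}, insert s S)"
    unfolding alg1_step_def stp by auto
  have PV: "P \<subseteq> V" and SV: "S \<subseteq> V" using I stp unfolding inv1_def by auto
  have A: "\<forall>t\<in>S. \<forall>p\<in>P. ballx V d k t \<inter> ballx V d k p = {}"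
   and B: "\<forall>t\<in>S. \<forall>u\<in>S. t \<noteq> u \<longrightarrow> ballx V d k t \<inter> ballx V d k u = {}"
    using I stp unfolding inv1_def by auto
  have C: "ballx V d k s \<inter> ballx V d k p = {}" if "p \<in> P" "d p s > 2 * NR V d k p" for p
    using disj[OF met] s that PV by blast
  show ?thesis unfolding st' inv1_def fst_conv snd_conv
    using PV SV s A B C by (auto simp: Int_commute)
qed

lemma inv_star:
  assumes met: "is_metric_on V d" and "(alg1_step V d k)\<^sup>*\<^sup>* st st'" and "inv1 V d k st"
  shows "inv1 V d k st'"
  using assms(2,3) by (induction rule: rtranclp_induct) (auto intro: inv_step[OF met])

theorem lemma1:
  fixes V :: "'a set" and d :: "'a \<Rightarrow> 'a \<Rightarrow> real" and k q :: nat
    and S Out :: "'a set" and \<sigma> :: "'a \<Rightarrow> 'a"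
  assumes "finite V" and "is_metric_on V d" and "k \<ge> 1"
    and "alg1_output V d k S Out \<sigma>"
  shows "card S \<le> k \<and> card Out \<le> q"
proof -
  have star: "(alg1_step V d k)\<^sup>*\<^sup>* (V, {}) ({}, S)" and O: "Out = {}"
    using assms(4) unfolding alg1_output_def by auto
  have "inv1 V d k (V, {})" unfolding inv1_def by auto
  hence I: "inv1 V d k ({}, S)" using inv_star[OF assms(2) star] by blast
  have SV: "S \<subseteq> V" and B: "\<forall>s\<in>S. \<forall>t\<in>S. s \<noteq> t \<longrightarrow> ballx V d k s \<inter> ballx V d k t = {}"
    using I unfolding inv1_def by auto
  have finS: "finite S" using SV assms(1) finite_subset by blast
  define m where "m = nbr_count V k"
  have "card S * m = (\<Sum>s\<in>S. m)" by simp
  also have "\<dots> \<le> (\<Sum>s\<in>S. card (ballx V d k s))"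
    using ball_card[OF assms(1) assms(3)] SV unfolding m_def by (meson subsetD sum_mono)
  also have "\<dots> = card (\<Union>s\<in>S. ballx V d k s)"
    using finS B assms(1) by (subst card_UN_disjoint) (auto simp: ballx_def)
  also have "\<dots> \<le> card V" using assms(1) by (intro card_mono) (auto simp: ballx_def)
  finally have cm: "card S * m \<le> card V" .
  have "card S \<le> k"
  proof (cases "card V = 0")
    case True thus ?thesis using cm finS SV assms(1)
      by (metis card_0_eq empty_subsetI le0 subset_antisym)
  next
    case False
    have "real (card V) / real k \<le> real m" unfolding m_def nbr_count_def
      using False by (simp add: le_nat_iff)
    hence "real (card V) \<le> real m * real k" using assms(3) by (simp add: divide_le_eq)
    hence "real (card S) * real (card V) \<le> real (card S) * (real m * real k)"
      by (simp add: mult_left_mono)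
    also have "\<dots> \<le> real (card V) * real k" using cm
      by (metis mult.assoc mult_right_mono of_nat_0_le_iff of_nat_le_iff of_nat_mult)
    finally have "real (card S) * real (card V) \<le> real k * real (card V)" by (simp add: mult.commute)
    thus ?thesis using False by simp
  qed
  thus ?thesis using O by simp
qed

end
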